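(* Let $\boldsymbol{P}$ be a feasible policy (as defined in the context). If the graph $\mathcal{G}_{\boldsymbol{P}}$ of $\boldsymbol{P}$ is connected, then the graph $\mathcal{G}_{\boldsymbol{Y}}$ of $\boldsymbol{Y}_{\boldsymbol{P}}$ is also connected.
   Context: For an $n\times n$ matrix $\boldsymbol{A}=[a_{i,m}]$, its graph $\mathcal{G}_{\boldsymbol{A}}$ has vertex set $\{1,\dots,n\}$ and an edge from $m$ to $i$ iff $a_{i,m}\ne0$; it is connected if there is a path between every pair of vertices. Setting: $M\ge2$ worker nodes, undirected graph with neighborhood indicators $d_{i,m}\in\{0,1\}$. $\boldsymbol{P}=[p_{i,m}]_{M\times M}$ has rows that are probability distributions; $t_{i,m}>0$ are iteration times; $\alpha>0$, $\rho>0$. Define $\overline{t}_i=\sum_m t_{i,m}p_{i,m}d_{i,m}$, $p_i=\frac{1/\overline{t}_i}{\sum_m 1/\overline{t}_m}$, $\gamma_{i,m}=\frac{d_{i,m}+d_{m,i}}{2p_{i,m}}$ (terms with $p_{i,m}=0$ taken as $0$). $\boldsymbol{Y}_{\boldsymbol{P}}=[y_{i,m}]$ with $y_{i,i}=1-2\alpha\rho\sum_{m\ne i}p_ip_{i,m}\gamma_{i,m}+\alpha^2\rho^2\sum_{m\ne i}(p_ip_{i,m}\gamma_{i,m}^2+p_mp_{m,i}\gamma_{m,i}^2)$ and, for $m\ne i$, $y_{i,m}=\alpha\rho(p_ip_{i,m}\gamma_{i,m}+p_mp_{m,i}\gamma_{m,i})-\alpha^2\rho^2(p_ip_{i,m}\gamma_{i,m}^2+p_mp_{m,i}\gamma_{m,i}^2)$.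 $\boldsymbol{P}$ is feasible if: there is $\overline{t}$ with $\overline{t}=\frac1M\sum_m t_{i,m}p_{i,m}d_{i,m}$ for all $i$; $p_{i,m}>\alpha\rho(d_{i,m}+d_{m,i})$ for all $i\ne m$ with $d_{i,m}\ne0$; $p_{i,m}=0$ whenever $d_{i,m}=0$; and $\sum_m p_{i,m}=1$ for all $i$. *)

theory Defs
  imports Complex_Main
begin

text \<open>Matrices are n x n with indices 0..<n, represented as functions nat => nat => real;
  entry A i m is a_{i,m}. The graph of A has vertex set {0..<n} and an edge m -> i iff a_{i,m} \<noteq> 0.\<close>

definition mat_graph :: "nat \<Rightarrow> (nat \<Rightarrow> nat \<Rightarrow> real) \<Rightarrow> (nat \<times> nat) set" where
  "mat_graph n A = {(m, i). m < n \<and> i < n \<and> A i m \<noteq> 0}"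

definition graph_connected :: "nat \<Rightarrow> (nat \<Rightarrow> nat \<Rightarrow> real) \<Rightarrow> bool" where
  "graph_connected n A \<longleftrightarrow> (\<forall>i<n. \<forall>j<n. (i, j) \<in> (mat_graph n A)\<^sup>*)"

definition tbar :: "nat \<Rightarrow> (nat \<Rightarrow> nat \<Rightarrow> real) \<Rightarrow> (nat \<Rightarrow> nat \<Rightarrow> real) \<Rightarrow> (nat \<Rightarrow> nat \<Rightarrow> real) \<Rightarrow> nat \<Rightarrow> real" where
  "tbar M t d P i = (\<Sum>m<M. t i m * P i m * d i m)"

definition pnode :: "nat \<Rightarrow> (nat \<Rightarrow> nat \<Rightarrow> real) \<Rightarrow> (nat \<Rightarrow> nat \<Rightarrow> real) \<Rightarrow> (nat \<Rightarrow> nat \<Rightarrow> real) \<Rightarrow> nat \<Rightarrow> real" where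
  "pnode M t d P i = (1 / tbar M t d P i) / (\<Sum>m<M. 1 / tbar M t d P m)"

definition gam :: "(nat \<Rightarrow> nat \<Rightarrow> real) \<Rightarrow> (nat \<Rightarrow> nat \<Rightarrow> real) \<Rightarrow> nat \<Rightarrow> nat \<Rightarrow> real" where
  "gam d P i m = (if P i m = 0 then 0 else (d i m + d m i) / (2 * P i m))"

definition Ymat :: "nat \<Rightarrow> (nat \<Rightarrow> nat \<Rightarrow> real) \<Rightarrow> (nat \<Rightarrow> nat \<Rightarrow> real) \<Rightarrow> real \<Rightarrow> real \<Rightarrow> (nat \<Rightarrow> nat \<Rightarrow> real) \<Rightarrow> nat \<Rightarrow> nat \<Rightarrow> real" where
  "Ymat M t d \<alpha> \<rho> P i m =
    (let pn = pnode M t d P; g = gam d P in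
     if i = m then
       1 - 2 * \<alpha> * \<rho> * (\<Sum>k\<in>{..<M} - {i}. pn i * P i k * g i k)
         + \<alpha>^2 * \<rho>^2 * (\<Sum>k\<in>{..<M} - {i}. pn i * P i k * (g i k)^2 + pn k * P k i * (g k i)^2)
     else
       \<alpha> * \<rho> * (pn i * P i m * g i m + pn m * P m i * g m i)
         - \<alpha>^2 * \<rho>^2 * (pn i * P i m * (g i m)^2 + pn m * P m i * (g m i)^2))"

definition feasible :: "nat \<Rightarrow> (nat \<Rightarrow> nat \<Rightarrow> real) \<Rightarrow> (nat \<Rightarrow> nat \<Rightarrow> real) \<Rightarrow> real \<Rightarrow> real \<Rightarrow> (nat \<Rightarrow> nat \<Rightarrow> real) \<Rightarrow> bool" where
  "feasible M t d \<alpha> \<rho> P \<longleftrightarrow>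
     (\<exists>tb. \<forall>i<M. tb = (1 / real M) * (\<Sum>m<M. t i m * P i m * d i m))
   \<and> (\<forall>i<M. \<forall>m<M. i \<noteq> m \<and> d i m \<noteq> 0 \<longrightarrow> P i m > \<alpha> * \<rho> * (d i m + d m i))
   \<and> (\<forall>i<M. \<forall>m<M. d i m = 0 \<longrightarrow> P i m = 0)
   \<and> (\<forall>i<M. (\<Sum>m<M. P i m) = 1)"

end

theory Submission
  imports Defs
begin

lemma tbar_nonneg:
  assumes "\<forall>i<M. \<forall>m<M. d i m = 0 \<or> d i m = 1"
    and "\<forall>i<M. \<forall>m<M. P i m \<ge> 0"
    and "\<forall>i<M. \<forall>m<M. t i m > 0" and "k < M"
  shows "tbar M t d P k \<ge> 0"
  unfolding tbar_def
proof (rule sum_nonneg)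
  fix x assume "x \<in> {..<M}"
  then have "t k x \<ge> 0" "P k x \<ge> 0" "d k x \<ge> 0" using assms by force+
  then show "t k x * P k x * d k x \<ge> 0" by simp
qed

lemma tbar_pos:
  assumes "\<forall>i<M. \<forall>m<M. d i m = 0 \<or> d i m = 1"
    and "\<forall>i<M. \<forall>m<M. P i m \<ge> 0"
    and "\<forall>i<M. \<forall>m<M. t i m > 0" and "k < M" and "m < M"
    and "P k m > 0" and "d k m = 1"
  shows "tbar M t d P k > 0"
proof -
  have nn: "\<forall>x\<in>{..<M}. t k x * P k x * d k x \<ge> 0"
  proof
    fix x assume "x \<in> {..<M}"
    then have "t k x \<ge> 0" "P k x \<ge> 0" "d k x \<ge> 0" using assms by force+
    then show "t k x * P k x * d k x \<ge> 0" by simp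
  qed
  have "t k m * P k m * d k m > 0" using assms by simp
  also have "t k m * P k m * d k m \<le> (\<Sum>x<M. t k x * P k x * d k x)"
    using nn assms(5) by (intro member_le_sum) auto
  finally show ?thesis unfolding tbar_def .
qed

lemma pnode_pos:
  assumes "\<forall>i<M. \<forall>m<M. d i m = 0 \<or> d i m = 1"
    and "\<forall>i<M. \<forall>m<M. P i m \<ge> 0"
    and "\<forall>i<M. \<forall>m<M. t i m > 0" and "k < M" and "m < M"
    and "P k m > 0" and "d k m = 1"
  shows "pnode M t d P k > 0"
proof -
  have tk: "tbar M t d P k > 0" using tbar_pos[OF assms] .
  have nn: "\<forall>x\<in>{..<M}. 1 / tbar M t d P x \<ge> 0"
    using tbar_nonneg[OF assms(1-3)] by simp
  have "1 / tbar M t d P k > 0" using tk by simp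
  also have "1 / tbar M t d P k \<le> (\<Sum>x<M. 1 / tbar M t d P x)"
    using nn assms(4) by (intro member_le_sum) auto
  finally have "(\<Sum>x<M. 1 / tbar M t d P x) > 0" .
  then show ?thesis unfolding pnode_def using tk by simp
qed

lemma key:
  fixes pa pb a x y :: real
  assumes "pa > 0" "pb > 0" "a > 0" "x > 2 * a" "y > 2 * a"
  shows "a * (pa * x * (1 / x) + pb * y * (1 / y)) - a^2 * (pa * x * (1 / x)^2 + pb * y * (1/y)^2) > 0"
proof -
  have "a * (pa * x * (1 / x) + pb * y * (1 / y)) - a^2 * (pa * x * (1 / x)^2 + pb * y * (1/y)^2)
      = pa * (a * (x - a) / x) + pb * (a * (y - a) / y)"
  proof -
    have "x \<noteq> 0" "y \<noteq> 0" using assms by auto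
    then show ?thesis by (simp add: field_simps power2_eq_square)
  qed
  also have "\<dots> > 0" using assms by (intro add_pos_pos mult_pos_pos divide_pos_pos) auto
  finally show ?thesis .
qed

theorem lemma3:
  fixes M :: nat and d t P :: "nat \<Rightarrow> nat \<Rightarrow> real" and \<alpha> \<rho> :: real
  assumes "M \<ge> 2"
    and "\<forall>i<M. \<forall>m<M. d i m = 0 \<or> d i m = 1"
    and "\<forall>i<M. \<forall>m<M. d i m = d m i"
    and "\<forall>i<M. \<forall>m<M. P i m \<ge> 0"
    and "\<forall>i<M. \<forall>m<M. t i m > 0"
    and "\<alpha> > 0" and "\<rho> > 0"
    and "feasible M t d \<alpha> \<rho> P"
    and "graph_connected M P"
  shows "graph_connected M (Ymat M t d \<alpha> \<rho> P)"
proof -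
  have F2: "\<forall>i<M. \<forall>m<M. i \<noteq> m \<and> d i m \<noteq> 0 \<longrightarrow> P i m > \<alpha> * \<rho> * (d i m + d m i)"
    and F3: "\<forall>i<M. \<forall>m<M. d i m = 0 \<longrightarrow> P i m = 0"
    using assms(8) unfolding feasible_def by blast+
  have edge: "Ymat M t d \<alpha> \<rho> P i m \<noteq> 0"
    if im: "i < M" "m < M" "i \<noteq> m" "P i m \<noteq> 0" for i m
  proof -
    have dim: "d i m = 1" using F3 im assms(2) by blast
    have dmi: "d m i = 1" using dim assms(3) im by metis
    have a: "\<alpha> * \<rho> > 0" using assms(6,7) by simp
    have Pim: "P i m > 2 * (\<alpha> * \<rho>)" using F2 im dim dmi by force
    have Pmi: "P m i > 2 * (\<alpha> * \<rho>)" using F2 im dim dmi by force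
    have gim: "gam d P i m = 1 / P i m" unfolding gam_def using Pim a dim dmi by simp
    have gmi: "gam d P m i = 1 / P m i" unfolding gam_def using Pmi a dim dmi by simp
    have pa: "pnode M t d P i > 0"
      using pnode_pos[OF assms(2,4,5) im(1,2)] Pim a dim by simp
    have pb: "pnode M t d P m > 0"
      using pnode_pos[OF assms(2,4,5) im(2,1)] Pmi a dmi by simp
    have "Ymat M t d \<alpha> \<rho> P i m = (\<alpha> * \<rho>) * (pnode M t d P i * P i m * (1 / P i m) + pnode M t d P m * P m i * (1 / P m i))
        - (\<alpha> * \<rho>)^2 * (pnode M t d P i * P i m * (1 / P i m)^2 + pnode M t d P m * P m i * (1 / P m i)^2)"
      unfolding Ymat_def Let_def using im gim gmi by (simp add: power_mult_distrib)
    also have "\<dots> > 0" by (rule key[OF pa pb a Pim Pmi])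
    finally show ?thesis by simp
  qed
  have sub: "mat_graph M P \<subseteq> mat_graph M (Ymat M t d \<alpha> \<rho> P) \<union> Id"
    unfolding mat_graph_def using edge by auto
  have "(mat_graph M P)\<^sup>* \<subseteq> (mat_graph M (Ymat M t d \<alpha> \<rho> P) \<union> Id)\<^sup>*"
    using sub by (rule rtrancl_mono)
  also have "\<dots> = (mat_graph M (Ymat M t d \<alpha> \<rho> P))\<^sup>*" by simp
  finally show ?thesis using assms(9) unfolding graph_connected_def by blast
qed

end
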